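(* Let $\beta\in\mathbb{C}$ with $|\beta|=1$, $m\in\mathrm{Hol}(\mathbb{D})$, $m\not\equiv0$, and $T:\mathrm{Hol}(\mathbb{D})\to\mathrm{Hol}(\mathbb{D})$ given by $(Tf)(z)=m(z)f(\beta z)$. Then (a) $0\notin\sigma_p(T)$; (b) if $\lambda\in\sigma_p(T)$, then $\beta^n\lambda\in\sigma_p(T)$ for all $n\in\mathbb{N}$.
   Context: $\mathbb{D}$ is the open unit disc, $\mathrm{Hol}(\mathbb{D})$ the space of holomorphic functions on $\mathbb{D}$. $\sigma_p(T)$ is the set of $\lambda\in\mathbb{C}$ such that $\lambda\mathrm{Id}-T$ is not injective. *)

theory Defs
  imports "HOL-Complex_Analysis.Complex_Analysis"
begin

text \<open>The open unit disc and Hol(D). Functions are total functions complex => complex;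
  two elements of Hol(D) are identified when they agree on the disc.\<close>

definition unit_disc :: "complex set" where
  "unit_disc = ball 0 1"

definition Hol_D :: "(complex \<Rightarrow> complex) set" where
  "Hol_D = {f. f holomorphic_on unit_disc}"

definition point_spectrum_Hol ::
  "((complex \<Rightarrow> complex) \<Rightarrow> (complex \<Rightarrow> complex)) \<Rightarrow> complex set" where
  "point_spectrum_Hol T =
     {c. \<exists>f\<in>Hol_D. (\<exists>z\<in>unit_disc. f z \<noteq> 0) \<and> (\<forall>z\<in>unit_disc. T f z = c * f z)}"

end

theory Submission
  imports Defs
begin

lemma vanish_disc:
  assumes "f holomorphic_on unit_disc" "r > 0" "ball c r \<subseteq> unit_disc"
    "\<And>w. w \<in> ball c r \<Longrightarrow> f w = 0" "z \<in> unit_disc"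
  shows "f z = 0"
  using analytic_continuation_open[of "ball c r" unit_disc f "\<lambda>_. 0" z] assms
  by (auto simp: unit_disc_def)

theorem proposition3p1:
  fixes \<beta> :: complex and m :: "complex \<Rightarrow> complex"
    and T :: "(complex \<Rightarrow> complex) \<Rightarrow> (complex \<Rightarrow> complex)"
  assumes "norm \<beta> = 1"
    and "m \<in> Hol_D"
    and "\<exists>z\<in>unit_disc. m z \<noteq> 0"
    and "\<And>f z. T f z = m z * f (\<beta> * z)"
  shows "0 \<notin> point_spectrum_Hol T \<and>
         (\<forall>\<mu>. \<mu> \<in> point_spectrum_Hol T \<longrightarrow> (\<forall>n::nat. \<beta> ^ n * \<mu> \<in> point_spectrum_Hol T))"
proof
  have b0: "\<beta> \<noteq> 0" using assms(1) by auto
  show "0 \<notin> point_spectrum_Hol T"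
  proof
    assume "0 \<in> point_spectrum_Hol T"
    then obtain f z1 where fh: "f holomorphic_on unit_disc" and z1: "z1 \<in> unit_disc" "f z1 \<noteq> 0"
      and eq: "\<And>z. z \<in> unit_disc \<Longrightarrow> m z * f (\<beta> * z) = 0"
      unfolding point_spectrum_Hol_def Hol_D_def using assms(4) by auto
    obtain z0 where z0: "z0 \<in> unit_disc" "m z0 \<noteq> 0" using assms(3) by auto
    have "continuous_on unit_disc m" using assms(2) holomorphic_on_imp_continuous_on
      unfolding Hol_D_def by auto
    then have "open (unit_disc \<inter> m -` (-{0}))"
      by (intro continuous_open_preimage) (auto simp: unit_disc_def)
    moreover have "z0 \<in> unit_disc \<inter> m -` (-{0})" using z0 by auto
    ultimately obtain e where e: "e > 0" "ball z0 e \<subseteq> unit_disc \<inter> m -` (-{0})"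
      by (meson openE)
    have inb: "w / \<beta> \<in> ball z0 e" if "w \<in> ball (\<beta> * z0) e" for w
    proof -
      have "dist z0 (w / \<beta>) = norm (\<beta> * z0 - w) / norm \<beta>"
        using b0 by (simp add: dist_norm norm_divide[symmetric] diff_divide_distrib)
      also have "\<dots> = dist (\<beta> * z0) w" using assms(1) by (simp add: dist_norm)
      finally show ?thesis using that by simp
    qed
    have sub: "ball (\<beta> * z0) e \<subseteq> unit_disc"
    proof
      fix w assume "w \<in> ball (\<beta> * z0) e"
      then have "w / \<beta> \<in> unit_disc" using inb e by auto
      then show "w \<in> unit_disc" using assms(1) by (simp add: unit_disc_def norm_divide)
    qed
    have van: "f w = 0" if "w \<in> ball (\<beta> * z0) e" for w
    proof -
      have "w / \<beta> \<in> unit_disc" "m (w / \<beta>) \<noteq> 0" using inb[OF that] e by auto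
      with eq[of "w / \<beta>"] b0 show ?thesis by auto
    qed
    have "f z1 = 0" by (rule vanish_disc[OF fh e(1) sub van z1(1)])
    with z1 show False by simp
  qed
  show "\<forall>\<mu>. \<mu> \<in> point_spectrum_Hol T \<longrightarrow> (\<forall>n::nat. \<beta> ^ n * \<mu> \<in> point_spectrum_Hol T)"
  proof (intro allI impI)
    fix \<mu> and n :: nat
    assume "\<mu> \<in> point_spectrum_Hol T"
    then obtain f z1 where fh: "f holomorphic_on unit_disc" and z1: "z1 \<in> unit_disc" "f z1 \<noteq> 0"
      and eq: "\<And>z. z \<in> unit_disc \<Longrightarrow> m z * f (\<beta> * z) = \<mu> * f z"
      unfolding point_spectrum_Hol_def Hol_D_def using assms(4) by auto
    define g where "g = (\<lambda>z. z ^ n * f z)"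
    have gh: "g holomorphic_on unit_disc" unfolding g_def using fh
      by (intro holomorphic_intros) auto
    have "\<exists>z\<in>unit_disc. g z \<noteq> 0"
    proof (rule ccontr)
      assume "\<not> ?thesis"
      then have g0: "\<And>z. z \<in> unit_disc \<Longrightarrow> g z = 0" by auto
      have sub: "ball (1/2) (1/4) \<subseteq> unit_disc"
      proof
        fix w :: complex assume "w \<in> ball (1/2) (1/4)"
        then have "norm (w - 1/2) < 1/4" by (simp add: dist_norm norm_minus_commute)
        moreover have "norm w \<le> norm (w - 1/2) + norm (1/2 :: complex)"
          using norm_triangle_ineq[of "w - 1/2" "1/2"] by simp
        moreover have "norm (1/2 :: complex) = 1/2" by simp
        ultimately have "norm w < 1" by linarith
        then show "w \<in> unit_disc" by (simp add: unit_disc_def)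
      qed
      have van: "f w = 0" if "w \<in> ball (1/2) (1/4)" for w
      proof -
        have "w \<noteq> 0" using that by (auto simp: dist_norm)
        with g0[of w] sub that show ?thesis by (auto simp: g_def)
      qed
      have "f z1 = 0" by (rule vanish_disc[OF fh _ sub van z1(1)]) simp
      with z1 show False by simp
    qed
    moreover have "\<forall>z\<in>unit_disc. T g z = \<beta> ^ n * \<mu> * g z"
    proof
      fix z assume z: "z \<in> unit_disc"
      have "T g z = \<beta> ^ n * z ^ n * (m z * f (\<beta> * z))"
        by (simp add: assms(4) g_def power_mult_distrib)
      also have "\<dots> = \<beta> ^ n * \<mu> * g z" using eq[OF z] by (simp add: g_def)
      finally show "T g z = \<beta> ^ n * \<mu> * g z" .
    qed
    ultimately show "\<beta> ^ n * \<mu> \<in> point_spectrum_Hol T"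
      using gh unfolding point_spectrum_Hol_def Hol_D_def by auto
  qed
qed

end
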